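(* Let $a,b,d>0$, $c>c_-$, and $\phi(x)=\frac{ax^3+bx^2+cx+d}{x^3}$, $x>0$. If $p$ is a prime period two solution of $\phi$ (i.e. $\phi(\phi(p))=p$ and $\phi(p)\neq p$), then $p$ is a zero of the sixth order polynomial $$G(x)=a^3x^6+(2a^2b-ac-d)x^5+(ab^2-ad-bc+2a^2c)x^4+(2a^2d+2abc-c^2-bd)x^3+(ac^2+2abd-2cd)x^2+(2acd-d^2)x+ad^2.$$ Consequently $\phi$ has at most three $2$-cycles.
   Context: $c_-$ is the unique negative zero of $Q(x)=4ax^3-b^2x^2-18abd\,x+27a^2d^2+4db^3$. A 2-cycle of $\phi$ is a pair $(p,\phi(p))$ where $p$ is a prime period two solution. *)

theory Defs
  imports Complex_Main
begin

definition Qpoly :: "real \<Rightarrow> real \<Rightarrow> real \<Rightarrow> real \<Rightarrow> real" where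
  "Qpoly a b d x = 4*a*x^3 - b^2*x^2 - 18*a*b*d*x + 27*a^2*d^2 + 4*d*b^3"

definition c_minus :: "real \<Rightarrow> real \<Rightarrow> real \<Rightarrow> real" where
  "c_minus a b d = (THE x. x < 0 \<and> Qpoly a b d x = 0)"

definition phi :: "real \<Rightarrow> real \<Rightarrow> real \<Rightarrow> real \<Rightarrow> real \<Rightarrow> real" where
  "phi a b c d x = (a*x^3 + b*x^2 + c*x + d) / x^3"

text \<open>p is a prime period two solution of phi (phi is defined on x > 0).\<close>
definition prime_period_two :: "(real \<Rightarrow> real) \<Rightarrow> real \<Rightarrow> bool" where
  "prime_period_two f p \<longleftrightarrow> p > 0 \<and> f p > 0 \<and> f (f p) = p \<and> f p \<noteq> p"

definition two_cycles :: "(real \<Rightarrow> real) \<Rightarrow> real set set" where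
  "two_cycles f = {{p, f p} | p. prime_period_two f p}"

definition Gpoly :: "real \<Rightarrow> real \<Rightarrow> real \<Rightarrow> real \<Rightarrow> real \<Rightarrow> real" where
  "Gpoly a b c d x = a^3*x^6 + (2*a^2*b - a*c - d)*x^5 + (a*b^2 - a*d - b*c + 2*a^2*c)*x^4
     + (2*a^2*d + 2*a*b*c - c^2 - b*d)*x^3 + (a*c^2 + 2*a*b*d - 2*c*d)*x^2
     + (2*a*c*d - d^2)*x + a*d^2"

end

theory Submission
  imports Defs "HOL-Computational_Algebra.Polynomial"
begin

lemma HFG:
  fixes a b c d p :: real
  shows "(a*p^3+b*p^2+c*p+d)^3*(p-a) - b*(a*p^3+b*p^2+c*p+d)^2*p^3
          - c*(a*p^3+b*p^2+c*p+d)*p^6 - d*p^9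
        = (p^4-a*p^3-b*p^2-c*p-d) * Gpoly a b c d p"
  unfolding Gpoly_def by (simp add: algebra_simps power2_eq_square power3_eq_cube power_numeral_reduce)

lemma G_zero:
  fixes a b c d p :: real
  assumes pp: "prime_period_two (phi a b c d) p"
  shows "Gpoly a b c d p = 0"
proof -
  define N where "N = a*p^3+b*p^2+c*p+d"
  define q where "q = phi a b c d p"
  have p0: "p > 0" and q0: "q > 0" and fq: "phi a b c d q = p" and qp: "q \<noteq> p"
    using pp unfolding prime_period_two_def q_def by auto
  have qN: "q * p^3 = N" using p0 unfolding q_def phi_def N_def by simp
  have e: "a*q^3+b*q^2+c*q+d = p*q^3" using fq q0 unfolding phi_def
    by (simp add: field_simps)
  have "a*(q*p^3)^3+b*(q*p^3)^2*p^3+c*(q*p^3)*p^6+d*p^9 - p*(q*p^3)^3 = p^9*(a*q^3+b*q^2+c*q+d - p*q^3)"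
    by (simp add: power_mult_distrib algebra_simps flip: power_add power_mult)
  hence "a*N^3+b*N^2*p^3+c*N*p^6+d*p^9 = p*N^3" using e by (simp add: qN)
  hence H0: "N^3*(p-a) - b*N^2*p^3 - c*N*p^6 - d*p^9 = 0" by (simp add: algebra_simps)
  have F: "p^4-a*p^3-b*p^2-c*p-d \<noteq> 0"
  proof
    assume "p^4-a*p^3-b*p^2-c*p-d = 0"
    hence "N = p*p^3" unfolding N_def by (simp add: algebra_simps power_Suc[symmetric] del: power_Suc)
    hence "q*p^3 = p*p^3" using qN by simp
    hence "q = p" using p0 by simp
    thus False using qp by simp
  qed
  from H0 HFG[where a=a and b=b and c=c and d=d and p=p] F show ?thesis unfolding N_def by (metis mult_eq_0_iff)
qed

definition gp :: "real \<Rightarrow> real \<Rightarrow> real \<Rightarrow> real \<Rightarrow> real poly" where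
  "gp a b c d = [:a*d^2, 2*a*c*d - d^2, a*c^2 + 2*a*b*d - 2*c*d, 2*a^2*d + 2*a*b*c - c^2 - b*d,
     a*b^2 - a*d - b*c + 2*a^2*c, 2*a^2*b - a*c - d, a^3:]"

lemma gp_poly: "poly (gp a b c d) x = Gpoly a b c d x"
  unfolding gp_def Gpoly_def by (simp add: algebra_simps eval_nat_numeral)

lemma gp_deg: "a \<noteq> 0 \<Longrightarrow> degree (gp a b c d) = 6"
  unfolding gp_def by simp

lemma gp_nz: "a \<noteq> 0 \<Longrightarrow> gp a b c d \<noteq> 0"
proof
  assume "a \<noteq> 0" "gp a b c d = 0"
  thus False using gp_deg[of a b c d] by simp
qed

lemma orbit_eq:
  assumes "prime_period_two f p" "x \<in> {p, f p}"
  shows "{p, f p} = {x, f x}"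
  using assms unfolding prime_period_two_def by auto

theorem lemma1:
  fixes a b c d :: real
  assumes "a > 0" "b > 0" "d > 0" "c > c_minus a b d"
  shows "(\<forall>p. prime_period_two (phi a b c d) p \<longrightarrow> Gpoly a b c d p = 0)
         \<and> finite (two_cycles (phi a b c d)) \<and> card (two_cycles (phi a b c d)) \<le> 3"
proof -
  define f where "f = phi a b c d"
  define R where "R = {x. poly (gp a b c d) x = 0}"
  have a0: "a \<noteq> 0" using assms by simp
  have finR: "finite R" unfolding R_def using poly_roots_finite gp_nz[OF a0] by blast
  have cardR: "card R \<le> 6" unfolding R_def using card_poly_roots_bound[OF gp_nz[OF a0]] gp_deg[OF a0] by simp
  have G: "\<forall>p. prime_period_two f p \<longrightarrow> Gpoly a b c d p = 0" using G_zero unfolding f_def by blast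
  have pp2: "prime_period_two f (f p)" if "prime_period_two f p" for p
    using that unfolding prime_period_two_def by auto
  have inR: "p \<in> R" if "prime_period_two f p" for p
    using G that gp_poly unfolding R_def by simp
  define C where "C = two_cycles f"
  have memC: "\<exists>p. A = {p, f p} \<and> prime_period_two f p" if "A \<in> C" for A
    using that unfolding C_def two_cycles_def by blast
  have sub: "C \<subseteq> Pow R"
  proof
    fix A assume "A \<in> C"
    then obtain p where A: "A = {p, f p}" "prime_period_two f p" using memC by blast
    show "A \<in> Pow R" using A inR pp2 by blast
  qed
  have finC: "finite C" using sub finR by (meson finite_Pow_iff finite_subset)
  have card2: "card A = 2" if "A \<in> C" for A
  proof -
    obtain p where A: "A = {p, f p}" "prime_period_two f p" using memC \<open>A \<in> C\<close> by blast
    have "f p \<noteq> p" using A(2) unfolding prime_period_two_def by blast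
    thus ?thesis using A(1) by simp
  qed
  have disj: "pairwise disjnt C"
    unfolding pairwise_def disjnt_def
  proof (intro ballI impI)
    fix A B assume AB: "A \<in> C" "B \<in> C" "A \<noteq> B"
    obtain p where A: "A = {p, f p}" "prime_period_two f p" using memC AB(1) by blast
    obtain r where B: "B = {r, f r}" "prime_period_two f r" using memC AB(2) by blast
    show "A \<inter> B = {}"
    proof (rule ccontr)
      assume "A \<inter> B \<noteq> {}"
      then obtain x where x: "x \<in> A" "x \<in> B" by blast
      have "A = {x, f x}" using orbit_eq[OF A(2)] x(1) A(1) by blast
      moreover have "B = {x, f x}" using orbit_eq[OF B(2)] x(2) B(1) by blast
      ultimately show False using AB(3) by simp
    qed
  qed
  have "card (\<Union>C) = sum card C"
    by (rule card_Union_disjoint[OF disj]) (use sub finR in \<open>auto intro: finite_subset\<close>)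
  also have "\<dots> = 2 * card C" using card2 by simp
  finally have eq: "card (\<Union>C) = 2 * card C" .
  have "\<Union>C \<subseteq> R" using sub by blast
  hence "card (\<Union>C) \<le> card R" using finR by (intro card_mono) auto
  with eq cardR have "card C \<le> 3" by simp
  with G finC show ?thesis unfolding C_def f_def by simp
qed

end
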